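(* For any $n\in\mathbb{N}$, the monoid $\mathrm{rps}_n$ does not satisfy any non-trivial identity of length less than or equal to $n$.
   Context: Let $\mathcal{A}_n=\{1<2<\cdots<n\}$. An rPS tableau is a finite (possibly empty) sequence of nonempty bottom-justified columns of boxes filled with positive integers, such that the entries of each column are weakly decreasing from top to bottom and the bottom entries of the columns form a strictly increasing sequence from left to right. Right insertion of a symbol $a$ into an rPS tableau $B$: if $a$ is strictly greater than every entry of the bottom row, append a new column consisting of $a$ at the right end; otherwise, let $z$ be the leftmost bottom-row entry with $z\geq a$ and put $a$ in a new box at the bottom of the column of $z$ (the previous entries of that column move up one box). For $w=w_1\cdots w_k$, $\mathfrak{R}_r(w)$ is obtained by starting with the empty tableau and right-inserting $w_1,\dots,w_k$ in order. The monoid $\mathrm{rps}_n$ is the quotient of $\mathcal{A}_n^*$ by the congruence $u\equiv v\iff\mathfrak{R}_r(u)=\mathfrak{R}_r(v)$. An identity is a formal equality $u=v$ of words over a countable alphabet of variables; it is non-trivial if $u\neq v$ as words; a monoid $M$ satisfies it if equality holds under every substitution of elements of $M$ for the variables (i.e. for every morphism from the free monoid on the variables to $M$). The length of an identity $u=v$ is $|u|$, the length of its left-hand side. *)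

theory Defs
  imports Main
begin

text \<open>Letters of the alphabet A_n = {1 < ... < n} are natural numbers 1..n.
  An rPS tableau is a list of columns (left to right); each column is stored
  bottom-first, i.e. the head of a column is its bottom entry.\<close>

type_synonym rps_tableau = "nat list list"

definition words_over :: "nat \<Rightarrow> nat list set" where
  "words_over n = {w. set w \<subseteq> {1..n}}"

fun rps_rinsert :: "rps_tableau \<Rightarrow> nat \<Rightarrow> rps_tableau" where
  "rps_rinsert [] a = [[a]]"
| "rps_rinsert (c # cs) a =
     (if a \<le> hd c then (a # c) # cs else c # rps_rinsert cs a)"

definition rps_Rr :: "nat list \<Rightarrow> rps_tableau" where
  "rps_Rr w = foldl rps_rinsert [] w"

definition rps_cong :: "nat \<Rightarrow> nat list \<Rightarrow> nat list \<Rightarrow> bool" where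
  "rps_cong n u v \<longleftrightarrow> u \<in> words_over n \<and> v \<in> words_over n \<and> rps_Rr u = rps_Rr v"

text \<open>Variables are natural numbers (a countable alphabet); an identity is a pair
  of words (u, v) over the variables.  A morphism from the free monoid on the
  variables to rps_n = A_n^*/rps_cong is determined by choosing, for each variable,
  a representative word over A_n (every element of rps_n is the class of such a word,
  and rps_cong is a congruence); its value on a word u is the class of the
  concatenation of the images.  Hence rps_n satisfies u = v iff for every such
  assignment the two concatenations are rps_cong-equivalent.\<close>
definition subst_word :: "(nat \<Rightarrow> nat list) \<Rightarrow> nat list \<Rightarrow> nat list" where
  "subst_word \<sigma> u = concat (map \<sigma> u)"

definition rps_satisfies :: "nat \<Rightarrow> nat list \<Rightarrow> nat list \<Rightarrow> bool" where
  "rps_satisfies n u v \<longleftrightarrow>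
     (\<forall>\<sigma>. (\<forall>x. \<sigma> x \<in> words_over n) \<longrightarrow>
        rps_cong n (subst_word \<sigma> u) (subst_word \<sigma> v))"

end

theory Submission
  imports Defs "HOL-Library.Sublist"
begin

fun pins :: "nat list \<Rightarrow> nat \<Rightarrow> nat list" where
  "pins [] a = [a]"
| "pins (b # bs) a = (if a \<le> b then a # bs else b # pins bs a)"

lemma map_hd_rinsert: "map hd (rps_rinsert T a) = pins (map hd T) a"
  by (induction T) auto

lemma length_Rr: "length (rps_Rr w) = length (foldl pins [] w)"
proof -
  have "\<And>T. map hd (foldl rps_rinsert T w) = foldl pins (map hd T) w"
    by (induction w) (auto simp: map_hd_rinsert)
  from this[of "[]"] show ?thesis unfolding rps_Rr_def by (metis length_map list.map(1))
qed

lemma concat_rinsert: "length (concat (rps_rinsert T a)) = Suc (length (concat T))"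
  by (induction T) auto

lemma concat_Rr: "length (concat (rps_Rr w)) = length w"
proof -
  have "\<And>T. length (concat (foldl rps_rinsert T w)) = length (concat T) + length w"
    by (induction w) (auto simp: concat_rinsert)
  from this[of "[]"] show ?thesis unfolding rps_Rr_def by simp
qed

lemma pins_nonempty: "pins B a \<noteq> []"
  by (cases B) auto

lemma pins_hd: "pins B a ! 0 \<le> a"
  by (cases B) auto

lemma pins_set: "set (pins B a) \<subseteq> insert a (set B)"
  by (induction B) auto

lemma pins_sorted: "sorted_wrt (<) B \<Longrightarrow> sorted_wrt (<) (pins B a)"
proof (induction B)
  case Nil then show ?case by simp
next
  case (Cons b bs)
  show ?case
  proof (cases "a \<le> b")
    case True then show ?thesis using Cons.prems by auto
  next
    case False
    then show ?thesis using Cons pins_set[of bs a] by auto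
  qed
qed

lemma pins_length: "length B \<le> length (pins B a)"
  by (induction B) auto

lemma pins_le: "i < length B \<Longrightarrow> pins B a ! i \<le> B ! i"
  by (induction B arbitrary: i) (auto simp: nth_Cons split: nat.splits)

lemma pins_cases:
  "i < length (pins B a) \<Longrightarrow>
   (i < length B \<and> pins B a ! i = B ! i) \<or>
   (pins B a ! i = a \<and> (i = 0 \<or> (i - 1 < length B \<and> B ! (i - 1) < a)))"
proof (induction B arbitrary: i)
  case Nil then show ?case by simp
next
  case (Cons b bs)
  show ?case
  proof (cases "a \<le> b")
    case True then show ?thesis using Cons.prems by (cases i) auto
  next
    case False
    show ?thesis
    proof (cases i)
      case 0 then show ?thesis using False by auto
    next
      case (Suc j)
      have "j < length (pins bs a)" using Cons.prems False Suc by auto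
      from Cons.IH[OF this] show ?thesis using False Suc by (cases j) auto
    qed
  qed
qed

lemma pins_key:
  "sorted_wrt (<) B \<Longrightarrow> m < length B \<Longrightarrow> B ! m < a \<Longrightarrow>
   Suc m < length (pins B a) \<and> pins B a ! Suc m \<le> a"
proof (induction B arbitrary: m)
  case Nil then show ?case by simp
next
  case (Cons b bs)
  have ba: "b < a"
  proof (cases m)
    case 0 then show ?thesis using Cons.prems by simp
  next
    case (Suc j)
    then have "bs ! j \<in> set bs" using Cons.prems by simp
    then have b1: "b < bs ! j" using Cons.prems by simp
    have "bs ! j < a" using Cons.prems Suc by simp
    then show ?thesis using b1 by simp
  qed
  then have eq: "pins (b # bs) a = b # pins bs a" by simp
  show ?case
  proof (cases m)
    case 0 then show ?thesis using eq pins_nonempty[of bs a] pins_hd[of bs a]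
      by (cases "pins bs a") auto
  next
    case (Suc j)
    have "Suc j < length (pins bs a) \<and> pins bs a ! Suc j \<le> a"
      using Cons.IH[of j] Cons.prems Suc by simp
    then show ?thesis using eq Suc by simp
  qed
qed

lemma subseq_snocE:
  assumes "subseq s (w @ [a])"
  shows "subseq s w \<or> (\<exists>s'. s = s' @ [a] \<and> subseq s' w)"
proof -
  from assms obtain s1 s2 where "s = s1 @ s2" "subseq s1 w" "subseq s2 [a]"
    by (rule subseq_appendE)
  moreover have "s2 = [] \<or> s2 = [a]" using \<open>subseq s2 [a]\<close>
    by (cases s2) (auto split: if_splits)
  ultimately show ?thesis by auto
qed

lemma sorted_wrt_subseq: "subseq xs ys \<Longrightarrow> sorted_wrt P ys \<Longrightarrow> sorted_wrt P xs"
  by (induction rule: list_emb.induct) (auto dest: list_emb_set)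

lemma upper:
  "\<forall>i < length (foldl pins [] w). \<exists>s. subseq s w \<and> sorted_wrt (<) s \<and> length s = Suc i
      \<and> (\<forall>x\<in>set s. x \<le> foldl pins [] w ! i)"
proof (induction w rule: rev_induct)
  case Nil then show ?case by simp
next
  case (snoc a w)
  define B where "B = foldl pins [] w"
  show ?case unfolding foldl_append foldl.simps B_def[symmetric]
  proof (intro allI impI)
    fix i assume i: "i < length (pins B a)"
    from pins_cases[OF i] show "\<exists>s. subseq s (w @ [a]) \<and> sorted_wrt (<) s \<and> length s = Suc i
      \<and> (\<forall>x\<in>set s. x \<le> pins B a ! i)"
    proof
      assume h: "i < length B \<and> pins B a ! i = B ! i"
      then obtain s where "subseq s w" "sorted_wrt (<) s" "length s = Suc i"
        "\<forall>x\<in>set s. x \<le> B ! i" using snoc.IH unfolding B_def by blast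
      then show ?thesis using h by (intro exI[of _ s]) (auto intro: subseq_rev_drop_many)
    next
      assume h: "pins B a ! i = a \<and> (i = 0 \<or> (i - 1 < length B \<and> B ! (i - 1) < a))"
      show ?thesis
      proof (cases "i = 0")
        case True then show ?thesis using h
          by (intro exI[of _ "[a]"]) (auto simp: subseq_singleton_left)
      next
        case False
        then have h2: "i - 1 < length B" "B ! (i - 1) < a" using h by auto
        then obtain s where s: "subseq s w" "sorted_wrt (<) s" "length s = Suc (i - 1)"
          "\<forall>x\<in>set s. x \<le> B ! (i - 1)" using snoc.IH unfolding B_def by blast
        show ?thesis
        proof (intro exI[of _ "s @ [a]"] conjI)
          show "subseq (s @ [a]) (w @ [a])" using s(1) by simp
          show "sorted_wrt (<) (s @ [a])" using s(2,4) h2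
            by (auto simp: sorted_wrt_append)
          show "length (s @ [a]) = Suc i" using s(3) False by simp
          show "\<forall>x\<in>set (s @ [a]). x \<le> pins B a ! i" using s(4) h h2 by auto
        qed
      qed
    qed
  qed
qed

lemma sorted_B: "sorted_wrt (<) (foldl pins [] w)"
  by (induction w rule: rev_induct) (auto intro: pins_sorted)

lemma lower:
  "\<forall>s' x. subseq (s' @ [x]) w \<and> sorted_wrt (<) (s' @ [x]) \<longrightarrow>
     length s' < length (foldl pins [] w) \<and> foldl pins [] w ! length s' \<le> x"
proof (induction w rule: rev_induct)
  case Nil then show ?case by simp
next
  case (snoc a w)
  define B where "B = foldl pins [] w"
  have sB: "sorted_wrt (<) B" unfolding B_def by (rule sorted_B)
  show ?case unfolding foldl_append foldl.simps B_def[symmetric]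
  proof (intro allI impI)
    fix s' x assume h: "subseq (s' @ [x]) (w @ [a]) \<and> sorted_wrt (<) (s' @ [x])"
    from subseq_snocE[OF h[THEN conjunct1]]
    show "length s' < length (pins B a) \<and> pins B a ! length s' \<le> x"
    proof
      assume "subseq (s' @ [x]) w"
      then have "length s' < length B \<and> B ! length s' \<le> x"
        using snoc.IH h unfolding B_def by blast
      then show ?thesis using pins_length[of B a] pins_le[of "length s'" B a] by auto
    next
      assume "\<exists>s''. s' @ [x] = s'' @ [a] \<and> subseq s'' w"
      then have xa: "x = a" and sw: "subseq s' w" by auto
      show ?thesis
      proof (cases s' rule: rev_cases)
        case Nil then show ?thesis using xa pins_nonempty[of B a] pins_hd[of B a] by auto
      next
        case (snoc t y)
        have st: "sorted_wrt (<) (t @ [y])" using h snoc by (auto simp: sorted_wrt_append)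
        have ya: "y < a" using h snoc xa by (auto simp: sorted_wrt_append)
        have "length t < length B \<and> B ! length t \<le> y"
          using snoc.IH sw st \<open>s' = t @ [y]\<close> unfolding B_def by blast
        then have "Suc (length t) < length (pins B a) \<and> pins B a ! Suc (length t) \<le> a"
          using pins_key[OF sB] ya by simp
        then show ?thesis using snoc xa by simp
      qed
    qed
  qed
qed


definition sig :: "nat list \<Rightarrow> nat \<Rightarrow> nat list" where
  "sig u z = filter (\<lambda>i. u ! (i - 1) = z) (rev [1..<Suc (length u)])"

lemma set_sig: "i \<in> set (sig u z) \<longleftrightarrow> 1 \<le> i \<and> i \<le> length u \<and> u ! (i - 1) = z"
  unfolding sig_def by auto

lemma sorted_sig: "sorted_wrt (>) (sig u z)"
  unfolding sig_def by (auto simp: sorted_wrt_filter sorted_wrt_rev)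

lemma subseq_set: "subseq xs ys \<Longrightarrow> set xs \<subseteq> set ys"
  by (auto dest: list_emb_set)

lemma len_le1: "sorted_wrt (<) (xs::nat list) \<Longrightarrow> sorted_wrt (>) xs \<Longrightarrow> length xs \<le> 1"
  by (cases xs; cases "tl xs") auto

lemma comb:
  "subseq [Suc i..<Suc (length u)] (concat (map (sig u) v)) \<Longrightarrow> subseq (drop i u) v"
proof (induction v arbitrary: i)
  case Nil
  then have "subseq [Suc i..<Suc (length u)] []" by simp
  then have "length [Suc i..<Suc (length u)] \<le> length ([]::nat list)" by (rule list_emb_length)
  then have "length u \<le> i" by (simp split: if_splits)
  then show ?case by simp
next
  case (Cons z v)
  show ?case
  proof (cases "i < length u")
    case False then show ?thesis by simp
  next
    case True
    have up: "[Suc i..<Suc (length u)] = Suc i # [Suc (Suc i)..<Suc (length u)]"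
      using True by (simp add: upt_conv_Cons)
    from Cons.prems obtain s1 s2 where sp: "[Suc i..<Suc (length u)] = s1 @ s2"
      "subseq s1 (sig u z)" "subseq s2 (concat (map (sig u) v))"
      by (auto elim: subseq_appendE)
    have "sorted_wrt (<) (s1 @ s2)" unfolding sp(1)[symmetric] by (rule sorted_wrt_upt)
    then have "sorted_wrt (<) s1" by (simp add: sorted_wrt_append)
    moreover have "sorted_wrt (>) s1" using sorted_wrt_subseq[OF sp(2) sorted_sig] .
    ultimately have "length s1 \<le> 1" by (rule len_le1)
    then consider "s1 = []" | x where "s1 = [x]"
      by (cases s1) auto
    then show ?thesis
    proof cases
      case 1
      then have "subseq (drop i u) v" using Cons.IH sp by simp
      then show ?thesis by (simp add: list_emb_Cons)
    next
      case 2
      then have x: "x = Suc i" and s2: "s2 = [Suc (Suc i)..<Suc (length u)]"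
        using sp(1) up by auto
      have "x \<in> set (sig u z)" using sp(2) 2 by (simp add: subseq_singleton_left)
      then have uz: "u ! i = z" using x set_sig by auto
      have "subseq (drop (Suc i) u) v" using Cons.IH[of "Suc i"] sp(3) s2 by simp
      moreover have "drop i u = z # drop (Suc i) u" using uz Cons_nth_drop_Suc[OF True] by simp
      ultimately show ?thesis by simp
    qed
  qed
qed

lemma self_lower:
  "subseq [Suc i..<Suc (length u)] (concat (map (sig u) (drop i u)))"
proof (induction "length u - i" arbitrary: i)
  case 0 then show ?case by simp
next
  case (Suc m)
  then have True: "i < length u" by simp
  have up: "[Suc i..<Suc (length u)] = [Suc i] @ [Suc (Suc i)..<Suc (length u)]"
    using True by (simp add: upt_conv_Cons)
  have dr: "concat (map (sig u) (drop i u)) = sig u (u ! i) @ concat (map (sig u) (drop (Suc i) u))"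
  proof -
    have "drop i u = u ! i # drop (Suc i) u" by (rule Cons_nth_drop_Suc[OF True, symmetric])
    then show ?thesis by simp
  qed
  have a: "subseq [Suc i] (sig u (u ! i))" using True by (simp add: subseq_singleton_left set_sig)
  have b: "subseq [Suc (Suc i)..<Suc (length u)] (concat (map (sig u) (drop (Suc i) u)))"
    using Suc(1)[of "Suc i"] Suc(2) by simp
  show ?case unfolding up dr by (rule list_emb_append_mono[OF a b])
qed

lemma uniq:
  assumes "sorted_wrt (<) s" "set s \<subseteq> {1..k}" "length s = k"
  shows "s = [Suc 0..<Suc k]"
proof -
  have d: "distinct s" "sorted s" using assms(1) by (auto simp: strict_sorted_iff)
  have "card (set s) = k" using d assms(3) by (simp add: distinct_card)
  then have "set s = {1..k}" using assms(2) by (intro card_subset_eq) auto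
  then show ?thesis using d by (intro sorted_distinct_set_unique) (auto simp del: upt_Suc)
qed

lemma len_const: "length (subst_word (\<lambda>_. [1]) u) = length u"
  unfolding subst_word_def by (induction u) auto

theorem proposition4p8:
  fixes n :: nat and u v :: "nat list"
  assumes "n \<ge> 1"
    and "u \<noteq> v"
    and "length u \<le> n"
  shows "\<not> rps_satisfies n u v"
proof (cases "subseq u v")
  case True
  have "length u \<noteq> length v" using True assms(2) subseq_same_length by blast
  moreover have "\<forall>x. (\<lambda>_. [1::nat]) x \<in> words_over n" using assms(1) by (simp add: words_over_def)
  moreover have "length (subst_word (\<lambda>_. [1]) u) = length u"
    "length (subst_word (\<lambda>_. [1]) v) = length v" by (rule len_const)+
  moreover have "rps_Rr (subst_word (\<lambda>_. [1]) u) \<noteq> rps_Rr (subst_word (\<lambda>_. [1]) v)"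
  proof
    assume "rps_Rr (subst_word (\<lambda>_. [1]) u) = rps_Rr (subst_word (\<lambda>_. [1]) v)"
    then have "length (concat (rps_Rr (subst_word (\<lambda>_. [1]) u))) =
       length (concat (rps_Rr (subst_word (\<lambda>_. [1]) v)))" by simp
    then show False using calculation by (simp only: concat_Rr)
  qed
  ultimately show ?thesis unfolding rps_satisfies_def rps_cong_def
    by (auto dest!: spec[of _ "\<lambda>_. [1::nat]"])
next
  case False
  define k where "k = length u"
  have k1: "1 \<le> k" using False unfolding k_def by (cases u) auto
  have wo: "\<forall>x. sig u x \<in> words_over n" using assms(3)
    by (auto simp: words_over_def set_sig k_def)
  define W where "W = subst_word (sig u) u"
  define W' where "W' = subst_word (sig u) v"
  have "subseq [Suc 0..<Suc k] W" using self_lower[of 0 u] unfolding W_def subst_word_def k_def by simp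
  moreover have e: "[Suc 0..<Suc k] = [Suc 0..<k] @ [k]" using k1 by simp
  ultimately have "subseq ([Suc 0..<k] @ [k]) W" by simp
  moreover have "sorted_wrt (<) ([Suc 0..<k] @ [k])" unfolding e[symmetric] by (rule sorted_wrt_upt)
  ultimately have "length [Suc 0..<k] < length (foldl pins [] W)" using lower[of W, rule_format, of "[Suc 0..<k]" k] by simp
  then have kW: "k \<le> length (rps_Rr W)" using k1 by (simp add: length_Rr)
  have "rps_Rr W \<noteq> rps_Rr W'"
  proof
    assume eq: "rps_Rr W = rps_Rr W'"
    then have "k - 1 < length (foldl pins [] W')" using kW k1 by (simp add: length_Rr)
    then obtain s where s: "subseq s W'" "sorted_wrt (<) s" "length s = k"
      using upper[of W', rule_format, of "k - 1"] k1 by auto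
    have "set W' \<subseteq> {1..k}" unfolding W'_def subst_word_def by (auto simp: set_sig k_def)
    then have "set s \<subseteq> {1..k}" using subseq_set[OF s(1)] by blast
    then have "s = [Suc 0..<Suc k]" using uniq s(2,3) by blast
    then have "subseq (drop 0 u) v" using comb[of 0 u v] s(1) unfolding W'_def subst_word_def k_def
      by simp
    then show False using False by simp
  qed
  then show ?thesis using wo unfolding rps_satisfies_def rps_cong_def W_def W'_def
    by (auto dest!: spec[of _ "sig u"])
qed

end
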